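(* In $\varepsilon\tau(\mathbf{C})$, for every derivation $\pi$ and every critical formula $C(e)$ used in $\pi$ with critical term $e$, there is an $e$-elimination set for $\pi$ and $\{C(e)\}$.
   Context: $\mathbf{C}$ is classical propositional logic. $\varepsilon\tau$-terms: $\varepsilon x\,A(x)$, $\tau x\,A(x)$. Critical formulas: $A(t)\to A(\varepsilon x\,A(x))$ (critical term $\varepsilon x\,A(x)$) and $A(\tau x\,A(x))\to A(t)$ (critical term $\tau x\,A(x)$); a critical formula belongs to its critical term. A derivation $\pi$ of $D$ in $\varepsilon\tau(\mathbf{L})$ is a derivation in the quantifier-free language with $\varepsilon\tau$-terms from a finite set of critical formulas using substitution instances of theorems of $\mathbf{L}$ and modus ponens. Suppose the critical formulas of $\pi$ are $\Gamma\cup\Lambda(e)\cup\Lambda'(e)$, where $\Lambda(e)\cup\Lambda'(e)$ are all the critical formulas of $\pi$ belonging to $e$ and $\Gamma$ the rest, and write the end formula as $D(e)$. A set $\{s_1,\dots,s_k\}$ of terms is an $e$-elimination set for $\pi$ and $\Lambda(e)$ if $\Gamma[s_1/e],\dots,\Gamma[s_k/e],\Lambda'(e)\vdash_{\mathbf{L}}D(s_1)\lor\dots\lor D(s_k)$, where $[s/e]$ and $D(s)$ denote replacing every occurrence of $e$ by $s$, and $\vdash_{\mathbf{L}}$ is derivability from the listed assumptions by substitution instances of theorems of $\mathbf{L}$ and modus ponens. *)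

theory Defs
  imports Main
begin

text \<open>Free variables are named by naturals; bound variables are de Bruijn
indices; Eps A and Tau A bind index 0 in their body A.\<close>

datatype trm = Free nat | Bound nat | Fn nat "trm list" | Eps frm | Tau frm
and frm = Atom nat "trm list" | Bot | Neg frm | Conj frm frm | Disj frm frm | Imp frm frm

text \<open>Instantiation of bound index k by a term u: A(u) is open_f 0 u A.\<close>
primrec open_t :: "nat \<Rightarrow> trm \<Rightarrow> trm \<Rightarrow> trm"
  and open_f :: "nat \<Rightarrow> trm \<Rightarrow> frm \<Rightarrow> frm" where
  "open_t k u (Free x) = Free x"
| "open_t k u (Bound i) = (if i = k then u else Bound i)"
| "open_t k u (Fn f ts) = Fn f (map (open_t k u) ts)"
| "open_t k u (Eps A) = Eps (open_f (Suc k) u A)"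
| "open_t k u (Tau A) = Tau (open_f (Suc k) u A)"
| "open_f k u (Atom p ts) = Atom p (map (open_t k u) ts)"
| "open_f k u Bot = Bot"
| "open_f k u (Neg A) = Neg (open_f k u A)"
| "open_f k u (Conj A B) = Conj (open_f k u A) (open_f k u B)"
| "open_f k u (Disj A B) = Disj (open_f k u A) (open_f k u B)"
| "open_f k u (Imp A B) = Imp (open_f k u A) (open_f k u B)"

primrec closed_t :: "nat \<Rightarrow> trm \<Rightarrow> bool"
  and closed_f :: "nat \<Rightarrow> frm \<Rightarrow> bool" where
  "closed_t k (Free x) = True"
| "closed_t k (Bound i) = (i < k)"
| "closed_t k (Fn f ts) = list_all (closed_t k) ts"
| "closed_t k (Eps A) = closed_f (Suc k) A"
| "closed_t k (Tau A) = closed_f (Suc k) A"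
| "closed_f k (Atom p ts) = list_all (closed_t k) ts"
| "closed_f k Bot = True"
| "closed_f k (Neg A) = closed_f k A"
| "closed_f k (Conj A B) = (closed_f k A \<and> closed_f k B)"
| "closed_f k (Disj A B) = (closed_f k A \<and> closed_f k B)"
| "closed_f k (Imp A B) = (closed_f k A \<and> closed_f k B)"

abbreviation lc_t :: "trm \<Rightarrow> bool" where "lc_t \<equiv> closed_t 0"
abbreviation lc_f :: "frm \<Rightarrow> bool" where "lc_f \<equiv> closed_f 0"

primrec repl_t :: "trm \<Rightarrow> trm \<Rightarrow> trm \<Rightarrow> trm"
  and repl_f :: "trm \<Rightarrow> trm \<Rightarrow> frm \<Rightarrow> frm" where
  "repl_t e s (Free x) = (if Free x = e then s else Free x)"
| "repl_t e s (Bound i) = (if Bound i = e then s else Bound i)"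
| "repl_t e s (Fn f ts) = (if Fn f ts = e then s else Fn f (map (repl_t e s) ts))"
| "repl_t e s (Eps A) = (if Eps A = e then s else Eps (repl_f e s A))"
| "repl_t e s (Tau A) = (if Tau A = e then s else Tau (repl_f e s A))"
| "repl_f e s (Atom p ts) = Atom p (map (repl_t e s) ts)"
| "repl_f e s Bot = Bot"
| "repl_f e s (Neg A) = Neg (repl_f e s A)"
| "repl_f e s (Conj A B) = Conj (repl_f e s A) (repl_f e s B)"
| "repl_f e s (Disj A B) = Disj (repl_f e s A) (repl_f e s B)"
| "repl_f e s (Imp A B) = Imp (repl_f e s A) (repl_f e s B)"

datatype pform = PVar nat | PBot | PNeg pform | PConj pform pform
  | PDisj pform pform | PImp pform pform

primrec peval :: "(nat \<Rightarrow> bool) \<Rightarrow> pform \<Rightarrow> bool" where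
  "peval v (PVar n) = v n"
| "peval v PBot = False"
| "peval v (PNeg P) = (\<not> peval v P)"
| "peval v (PConj P Q) = (peval v P \<and> peval v Q)"
| "peval v (PDisj P Q) = (peval v P \<or> peval v Q)"
| "peval v (PImp P Q) = (peval v P \<longrightarrow> peval v Q)"

definition theorem_C :: "pform \<Rightarrow> bool" where
  "theorem_C P \<longleftrightarrow> (\<forall>v. peval v P)"

primrec psubst :: "(nat \<Rightarrow> frm) \<Rightarrow> pform \<Rightarrow> frm" where
  "psubst \<sigma> (PVar n) = \<sigma> n"
| "psubst \<sigma> PBot = Bot"
| "psubst \<sigma> (PNeg P) = Neg (psubst \<sigma> P)"
| "psubst \<sigma> (PConj P Q) = Conj (psubst \<sigma> P) (psubst \<sigma> Q)"
| "psubst \<sigma> (PDisj P Q) = Disj (psubst \<sigma> P) (psubst \<sigma> Q)"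
| "psubst \<sigma> (PImp P Q) = Imp (psubst \<sigma> P) (psubst \<sigma> Q)"

definition inst_C :: "frm \<Rightarrow> bool" where
  "inst_C A \<longleftrightarrow> lc_f A \<and> (\<exists>P \<sigma>. theorem_C P \<and> A = psubst \<sigma> P)"

inductive derivC :: "frm set \<Rightarrow> frm \<Rightarrow> bool" where
  hyp: "A \<in> \<Gamma> \<Longrightarrow> derivC \<Gamma> A"
| ax: "inst_C A \<Longrightarrow> derivC \<Gamma> A"
| mp: "derivC \<Gamma> A \<Longrightarrow> derivC \<Gamma> (Imp A B) \<Longrightarrow> derivC \<Gamma> B"

text \<open>EpsCrit A t stands for A(t) \<longrightarrow> A(eps x A(x)); TauCrit A t for
A(tau x A(x)) \<longrightarrow> A(t). A is a body with bound index 0 for x.\<close>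
datatype crit = EpsCrit frm trm | TauCrit frm trm

primrec crit_term :: "crit \<Rightarrow> trm" where
  "crit_term (EpsCrit A t) = Eps A"
| "crit_term (TauCrit A t) = Tau A"

primrec crit_fml :: "crit \<Rightarrow> frm" where
  "crit_fml (EpsCrit A t) = Imp (open_f 0 t A) (open_f 0 (Eps A) A)"
| "crit_fml (TauCrit A t) = Imp (open_f 0 (Tau A) A) (open_f 0 t A)"

primrec wf_crit :: "crit \<Rightarrow> bool" where
  "wf_crit (EpsCrit A t) = (closed_f 1 A \<and> lc_t t)"
| "wf_crit (TauCrit A t) = (closed_f 1 A \<and> lc_t t)"

text \<open>A derivation pi of D is represented by its finite set Cs of critical
formulas together with the end formula D derivable from them.\<close>
definition is_derivation :: "crit set \<Rightarrow> frm \<Rightarrow> bool" where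
  "is_derivation Cs D \<longleftrightarrow> finite Cs \<and> (\<forall>c\<in>Cs. wf_crit c) \<and> lc_f D
     \<and> derivC (crit_fml ` Cs) D"

fun disjs :: "frm list \<Rightarrow> frm" where
  "disjs [] = Bot"
| "disjs [A] = A"
| "disjs (A # As) = Disj A (disjs As)"

text \<open>ss is an e-elimination set for the derivation (Cs, D) and Lam \<subseteq> crits of e:
Gamma = crits of Cs not belonging to e, Lam' = crits belonging to e not in Lam.\<close>
definition elim_set :: "trm \<Rightarrow> trm list \<Rightarrow> crit set \<Rightarrow> frm \<Rightarrow> crit set \<Rightarrow> bool" where
  "elim_set e ss Cs D Lam \<longleftrightarrow> ss \<noteq> [] \<and> list_all lc_t ss \<and>
     derivC ((\<Union>s\<in>set ss. repl_f e s ` crit_fml ` {c\<in>Cs. crit_term c \<noteq> e})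
             \<union> crit_fml ` ({c\<in>Cs. crit_term c = e} - Lam))
            (disjs (map (\<lambda>s. repl_f e s D) ss))"

end

theory Submission
  imports Defs
begin

lemma closed_mono:
  fixes x :: trm and A :: frm
  shows "closed_t k x \<Longrightarrow> k \<le> m \<Longrightarrow> closed_t m x"
    and "closed_f k A \<Longrightarrow> k \<le> m \<Longrightarrow> closed_f m A"
  by (induct x and A arbitrary: k m and k m) (auto simp: list_all_iff)

lemma closed_open:
  fixes x :: trm and A :: frm
  shows "closed_t (Suc k) x \<Longrightarrow> closed_t k u \<Longrightarrow> closed_t k (open_t k u x)"
    and "closed_f (Suc k) A \<Longrightarrow> closed_t k u \<Longrightarrow> closed_f k (open_f k u A)"
proof (induct x and A arbitrary: k and k)
  case (Eps B) then show ?case using closed_mono(1)[of k u "Suc k"] by auto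
next
  case (Tau B) then show ?case using closed_mono(1)[of k u "Suc k"] by auto
qed (auto simp: list_all_iff)

lemma closed_repl:
  fixes x :: trm and A :: frm
  shows "closed_t k x \<Longrightarrow> lc_t s \<Longrightarrow> closed_t k (repl_t e s x)"
    and "closed_f k A \<Longrightarrow> lc_t s \<Longrightarrow> closed_f k (repl_f e s A)"
  by (induct x and A arbitrary: k and k) (auto simp: list_all_iff intro: closed_mono)

lemma repl_id:
  fixes x :: trm and A :: frm
  shows "repl_t e e x = x" and "repl_f e e A = A"
  by (induct x and A) (auto intro: map_idI)

lemma open_size:
  fixes x :: trm and A :: frm
  shows "open_t k u x = x \<or> size u \<le> size (open_t k u x)"
    and "open_f k u A = A \<or> size u \<le> size (open_f k u A)"
proof (induct x and A arbitrary: k and k)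
  case (Fn f ts)
  show ?case
  proof (cases "\<forall>y\<in>set ts. open_t k u y = y")
    case True then show ?thesis by (auto intro: map_idI)
  next
    case False
    then obtain y where y: "y \<in> set ts" "open_t k u y \<noteq> y" by auto
    with Fn have "size u \<le> size (open_t k u y)" by blast
    moreover have "size (open_t k u y) \<le> size_list size (map (open_t k u) ts)"
      using y(1) by (simp add: size_list_estimation')
    ultimately show ?thesis by simp
  qed
next
  case (Atom f ts)
  show ?case
  proof (cases "\<forall>y\<in>set ts. open_t k u y = y")
    case True then show ?thesis by (auto intro: map_idI)
  next
    case False
    then obtain y where y: "y \<in> set ts" "open_t k u y \<noteq> y" by auto
    with Atom have "size u \<le> size (open_t k u y)" by blast
    moreover have "size (open_t k u y) \<le> size_list size (map (open_t k u) ts)"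
      using y(1) by (simp add: size_list_estimation')
    ultimately show ?thesis by simp
  qed
qed (auto, (metis le_SucI trans_le_add1 trans_le_add2)+)

lemma repl_self: "repl_t e s e = s"
  by (cases e) auto

lemma repl_open:
  fixes x :: trm and A :: frm
  shows "size x < size e \<Longrightarrow> repl_t e s (open_t k e x) = open_t k s x"
    and "size A < size e \<Longrightarrow> repl_f e s (open_f k e A) = open_f k s A"
proof (induct x and A arbitrary: k and k)
  case (Fn f ts)
  have ne: "Fn f (map (open_t k e) ts) \<noteq> e"
  proof
    assume h: "Fn f (map (open_t k e) ts) = e"
    from open_size(1)[of k e "Fn f ts"] h Fn.prems show False
    proof (cases "\<forall>y\<in>set ts. open_t k e y = y")
      case True then have "map (open_t k e) ts = ts" by (auto intro: map_idI)
      with h Fn.prems show False by auto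
    next
      case False
      then obtain y where y: "y \<in> set ts" "open_t k e y \<noteq> y" by auto
      with open_size(1)[of k e y] have "size e \<le> size (open_t k e y)" by auto
      moreover have "size (open_t k e y) \<le> size_list size (map (open_t k e) ts)"
        using y(1) by (simp add: size_list_estimation')
      moreover have "size (Fn f (map (open_t k e) ts)) = size e" by (simp only: h)
      then have "size e = size_list size (map (open_t k e) ts) + 1" by simp
      ultimately show False by simp
    qed
  qed
  have "\<And>y. y \<in> set ts \<Longrightarrow> size y < size e"
  proof -
    fix y assume "y \<in> set ts"
    then have "size y \<le> size_list size ts" by (simp add: size_list_estimation')
    then show "size y < size e" using Fn.prems by simp
  qed
  with Fn.hyps ne show ?case by simp
next
  case (Eps B)
  have ne: "trm.Eps (open_f (Suc k) e B) \<noteq> e"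
  proof
    assume h: "trm.Eps (open_f (Suc k) e B) = e"
    from open_size(2)[of "Suc k" e B] show False
    proof
      assume "open_f (Suc k) e B = B" with h Eps.prems show False by auto
    next
      assume "size e \<le> size (open_f (Suc k) e B)"
      moreover have "size (trm.Eps (open_f (Suc k) e B)) = size e" by (simp only: h)
      then have "size e = size (open_f (Suc k) e B) + 1" by simp
      ultimately show False by simp
    qed
  qed
  with Eps show ?case by simp
next
  case (Tau B)
  have ne: "Tau (open_f (Suc k) e B) \<noteq> e"
  proof
    assume h: "Tau (open_f (Suc k) e B) = e"
    from open_size(2)[of "Suc k" e B] show False
    proof
      assume "open_f (Suc k) e B = B" with h Tau.prems show False by auto
    next
      assume "size e \<le> size (open_f (Suc k) e B)"
      moreover have "size (Tau (open_f (Suc k) e B)) = size e" by (simp only: h)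
      then have "size e = size (open_f (Suc k) e B) + 1" by simp
      ultimately show False by simp
    qed
  qed
  with Tau show ?case by simp
next
  case (Atom p ts)
  have "\<And>y. y \<in> set ts \<Longrightarrow> size y < size e"
  proof -
    fix y assume "y \<in> set ts"
    then have "size y \<le> size_list size ts" by (simp add: size_list_estimation')
    then show "size y < size e" using Atom.prems by simp
  qed
  with Atom.hyps show ?case by simp
next
  case (Free x)
  then have "Free x \<noteq> e" by auto
  then show ?case by simp
next
  case (Bound i)
  then have "Bound i \<noteq> e" by auto
  then show ?case by (simp add: repl_self)
qed simp_all

primrec evf :: "(frm \<Rightarrow> bool) \<Rightarrow> frm \<Rightarrow> bool" where
  "evf w (Atom p ts) = w (Atom p ts)"
| "evf w Bot = False"
| "evf w (Neg A) = (\<not> evf w A)"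
| "evf w (Conj A B) = (evf w A \<and> evf w B)"
| "evf w (Disj A B) = (evf w A \<or> evf w B)"
| "evf w (Imp A B) = (evf w A \<longrightarrow> evf w B)"

lemma evf_psubst: "evf w (psubst \<sigma> P) = peval (\<lambda>n. evf w (\<sigma> n)) P"
  by (induct P) auto

lemma sound: "derivC H X \<Longrightarrow> (\<forall>h\<in>H. evf w h) \<Longrightarrow> evf w X"
  by (induct rule: derivC.induct) (auto simp: inst_C_def theorem_C_def evf_psubst)

primrec atoms :: "frm \<Rightarrow> frm set" where
  "atoms (Atom p ts) = {Atom p ts}"
| "atoms Bot = {}"
| "atoms (Neg A) = atoms A"
| "atoms (Conj A B) = atoms A \<union> atoms B"
| "atoms (Disj A B) = atoms A \<union> atoms B"
| "atoms (Imp A B) = atoms A \<union> atoms B"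

lemma finite_atoms: "finite (atoms A)"
  by (induct A) auto

definition idx :: "frm list \<Rightarrow> frm \<Rightarrow> nat" where
  "idx L a = (SOME i. i < length L \<and> L ! i = a)"

lemma idx: "a \<in> set L \<Longrightarrow> L ! idx L a = a"
proof -
  assume "a \<in> set L"
  then obtain i where i: "i < length L" "L ! i = a" by (auto simp: in_set_conv_nth)
  show ?thesis unfolding idx_def by (rule someI2[of _ i]) (use i in auto)
qed

primrec abst :: "frm list \<Rightarrow> frm \<Rightarrow> pform" where
  "abst L (Atom p ts) = PVar (idx L (Atom p ts))"
| "abst L Bot = PBot"
| "abst L (Neg A) = PNeg (abst L A)"
| "abst L (Conj A B) = PConj (abst L A) (abst L B)"
| "abst L (Disj A B) = PDisj (abst L A) (abst L B)"
| "abst L (Imp A B) = PImp (abst L A) (abst L B)"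

lemma psubst_abst: "atoms A \<subseteq> set L \<Longrightarrow> psubst (\<lambda>n. L ! n) (abst L A) = A"
  by (induct A) (auto simp: idx)

lemma peval_abst: "peval v (abst L A) = evf (\<lambda>a. v (idx L a)) A"
  by (induct A) auto

lemma valid_inst: "lc_f A \<Longrightarrow> (\<forall>w. evf w A) \<Longrightarrow> inst_C A"
proof -
  assume lc: "lc_f A" and v: "\<forall>w. evf w A"
  obtain L where L: "set L = atoms A" using finite_atoms finite_list by blast
  have "theorem_C (abst L A)" using v by (simp add: theorem_C_def peval_abst)
  moreover have "A = psubst (\<lambda>n. L ! n) (abst L A)" using L psubst_abst by simp
  ultimately show ?thesis using lc unfolding inst_C_def by blast
qed

fun imps :: "frm list \<Rightarrow> frm \<Rightarrow> frm" where
  "imps [] X = X"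
| "imps (h # hs) X = Imp h (imps hs X)"

lemma evf_imps: "evf w (imps hs X) = ((\<forall>h\<in>set hs. evf w h) \<longrightarrow> evf w X)"
  by (induct hs) auto

lemma lc_imps: "\<forall>h\<in>set hs. lc_f h \<Longrightarrow> lc_f X \<Longrightarrow> lc_f (imps hs X)"
  by (induct hs) auto

lemma peel: "derivC H (imps hs X) \<Longrightarrow> set hs \<subseteq> H \<Longrightarrow> derivC H X"
proof (induct hs)
  case (Cons h hs)
  have h: "derivC H h" using Cons.prems by (auto intro: derivC.hyp)
  have "derivC H (Imp h (imps hs X))" using Cons.prems(1) by simp
  then have "derivC H (imps hs X)" using h derivC.mp by blast
  then show ?case using Cons.hyps Cons.prems(2) by simp
qed simp

lemma complete:
  assumes "finite H" "\<forall>h\<in>H. lc_f h" "lc_f X" "\<forall>w. (\<forall>h\<in>H. evf w h) \<longrightarrow> evf w X"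
  shows "derivC H X"
proof -
  obtain hs where hs: "set hs = H" using assms(1) finite_list by blast
  have "inst_C (imps hs X)"
    by (rule valid_inst) (use assms hs in \<open>auto simp: lc_imps evf_imps\<close>)
  then have "derivC H (imps hs X)" by (rule derivC.ax)
  then show ?thesis using peel hs by blast
qed

lemma evf_repl: "evf (\<lambda>a. w (repl_f e s a)) X = evf w (repl_f e s X)"
  by (induct X) auto

lemma lc_crit: "wf_crit c \<Longrightarrow> lc_f (crit_fml c)"
  by (cases c) (auto intro!: closed_open(2))

lemma core:
  assumes fin: "finite Cs" and wf: "\<forall>c\<in>Cs. wf_crit c" and lcD: "lc_f D"
    and der: "derivC (crit_fml ` Cs) D" and CC: "C \<in> Cs"
    and lcs: "lc_t s" and lce: "lc_t (crit_term C)"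
    and hprop: "\<And>w c. \<not> evf w (crit_fml C) \<Longrightarrow> c \<in> Cs \<Longrightarrow> crit_term c = crit_term C
       \<Longrightarrow> evf w (repl_f (crit_term C) s (crit_fml c))"
  shows "elim_set (crit_term C) [crit_term C, s] Cs D {C}"
proof -
  define e where "e = crit_term C"
  define H where "H = (\<Union>s'\<in>set [e, s]. repl_f e s' ` crit_fml ` {c\<in>Cs. crit_term c \<noteq> e})
             \<union> crit_fml ` ({c\<in>Cs. crit_term c = e} - {C})"
  have "derivC H (disjs (map (\<lambda>s'. repl_f e s' D) [e, s]))"
  proof (rule complete)
    show "finite H" unfolding H_def using fin by auto
    show "\<forall>h\<in>H. lc_f h" unfolding H_def using wf lc_crit lcs lce closed_repl(2) e_def by auto
    show "lc_f (disjs (map (\<lambda>s'. repl_f e s' D) [e, s]))"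
      using lcD lcs lce closed_repl(2) e_def by auto
    show "\<forall>w. (\<forall>h\<in>H. evf w h) \<longrightarrow> evf w (disjs (map (\<lambda>s'. repl_f e s' D) [e, s]))"
    proof (intro allI impI)
      fix w assume Hw: "\<forall>h\<in>H. evf w h"
      show "evf w (disjs (map (\<lambda>s'. repl_f e s' D) [e, s]))"
      proof (cases "evf w (crit_fml C)")
        case True
        have "\<forall>c\<in>Cs. evf w (crit_fml c)"
        proof
          fix c assume c: "c \<in> Cs"
          show "evf w (crit_fml c)"
          proof (cases "crit_term c = e")
            case False
            then have "repl_f e e (crit_fml c) \<in> H" unfolding H_def using c by auto
            then show ?thesis using Hw by (simp add: repl_id)
          next
            case True
            show ?thesis
            proof (cases "c = C")
              case False
              then have "crit_fml c \<in> H" unfolding H_def using c True by auto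
              then show ?thesis using Hw by simp
            qed (use \<open>evf w (crit_fml C)\<close> in simp)
          qed
        qed
        then have "evf w D" using sound[OF der] by blast
        then show ?thesis by (simp add: repl_id)
      next
        case False
        define w' where "w' = (\<lambda>a. w (repl_f e s a))"
        have "\<forall>c\<in>Cs. evf w' (crit_fml c)"
        proof
          fix c assume c: "c \<in> Cs"
          show "evf w' (crit_fml c)" unfolding w'_def evf_repl
          proof (cases "crit_term c = e")
            case False
            then have "repl_f e s (crit_fml c) \<in> H" unfolding H_def using c by auto
            then show "evf w (repl_f e s (crit_fml c))" using Hw by simp
          next
            case True
            then show "evf w (repl_f e s (crit_fml c))"
              using hprop[OF \<open>\<not> evf w (crit_fml C)\<close> c] e_def by simp
          qed
        qed
        then have "evf w' D" using sound[OF der] by blast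
        then show ?thesis unfolding w'_def evf_repl by simp
      qed
    qed
  qed
  then show ?thesis unfolding elim_set_def H_def e_def using lcs lce by simp
qed

theorem mainTheorem13:
  assumes "is_derivation Cs D"
    and "C \<in> Cs"
  shows "\<exists>ss. elim_set (crit_term C) ss Cs D {C}"
proof -
  have fin: "finite Cs" and wf: "\<forall>c\<in>Cs. wf_crit c" and lcD: "lc_f D"
    and der: "derivC (crit_fml ` Cs) D"
    using assms(1) unfolding is_derivation_def by auto
  show ?thesis
  proof (cases C)
    case (EpsCrit A t)
    have wfC: "closed_f 1 A" "lc_t t" using wf assms(2) EpsCrit by auto
    have "elim_set (crit_term C) [crit_term C, t] Cs D {C}"
    proof (rule core[OF fin wf lcD der assms(2)])
      show "lc_t t" by fact
      show "lc_t (crit_term C)" using wfC EpsCrit by simp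
      fix w c assume nC: "\<not> evf w (crit_fml C)" and c: "c \<in> Cs" "crit_term c = crit_term C"
      then obtain t' where ct: "c = EpsCrit A t'" using EpsCrit by (cases c) auto
      have "repl_f (trm.Eps A) t (open_f 0 (trm.Eps A) A) = open_f 0 t A"
        by (rule repl_open(2)) simp
      then show "evf w (repl_f (crit_term C) t (crit_fml c))"
        using nC ct EpsCrit by simp
    qed
    then show ?thesis by blast
  next
    case (TauCrit A t)
    have wfC: "closed_f 1 A" "lc_t t" using wf assms(2) TauCrit by auto
    have "elim_set (crit_term C) [crit_term C, t] Cs D {C}"
    proof (rule core[OF fin wf lcD der assms(2)])
      show "lc_t t" by fact
      show "lc_t (crit_term C)" using wfC TauCrit by simp
      fix w c assume nC: "\<not> evf w (crit_fml C)" and c: "c \<in> Cs" "crit_term c = crit_term C"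
      then obtain t' where ct: "c = TauCrit A t'" using TauCrit by (cases c) auto
      have "repl_f (Tau A) t (open_f 0 (Tau A) A) = open_f 0 t A"
        by (rule repl_open(2)) simp
      then show "evf w (repl_f (crit_term C) t (crit_fml c))"
        using nC ct TauCrit by simp
    qed
    then show ?thesis by blast
  qed
qed

end
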